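(* Let $G$ be an abelian Hausdorff topological group and $A\subseteq G$ with $0\notin A$. Then $A$ is absolutely Cauchy summable in $G$ if and only if the Kalton map $K_A:S_A\to G$ is continuous.
   Context: For $a\in G$, $\langle a\rangle$ is the cyclic subgroup generated by $a$ with the subspace topology. $P_A=\prod_{a\in A}\langle a\rangle$ carries the Tychonoff product topology and $S_A=\bigoplus_{a\in A}\langle a\rangle$ (finitely supported elements of $P_A$) the subspace topology. The Kalton map $K_A:S_A\to G$ is the unique group homomorphism extending each inclusion $\langle a\rangle\to G$, $a\in A$. $A$ is absolutely Cauchy summable if for every neighbourhood $U$ of $0$ there is a finite $F\subseteq A$ such that the subgroup $\langle A\setminus F\rangle$ generated by $A\setminus F$ is contained in $U$. *)

theory Defs
  imports "HOL-Analysis.Analysis"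
begin

definition gen_subgroup :: "'a::ab_group_add set \<Rightarrow> 'a set" where
  "gen_subgroup S = \<Inter>{H. S \<subseteq> H \<and> 0 \<in> H \<and> (\<forall>x\<in>H. \<forall>y\<in>H. x - y \<in> H)}"

definition cyclic_subgroup :: "'a::ab_group_add \<Rightarrow> 'a set" where
  "cyclic_subgroup a = gen_subgroup {a}"

definition P_top :: "'a::{topological_ab_group_add} set \<Rightarrow> ('a \<Rightarrow> 'a) topology" where
  "P_top A = product_topology (\<lambda>a. subtopology euclidean (cyclic_subgroup a)) A"

definition S_set :: "'a::{topological_ab_group_add} set \<Rightarrow> ('a \<Rightarrow> 'a) set" where
  "S_set A = {f \<in> topspace (P_top A). finite {a \<in> A. f a \<noteq> 0}}"

definition S_top :: "'a::{topological_ab_group_add} set \<Rightarrow> ('a \<Rightarrow> 'a) topology" where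
  "S_top A = subtopology (P_top A) (S_set A)"

text \<open>Kalton map: the homomorphism S_A \<rightarrow> G extending the inclusions, i.e. the finite sum.\<close>
definition kalton_map :: "'a::{topological_ab_group_add} set \<Rightarrow> ('a \<Rightarrow> 'a) \<Rightarrow> 'a" where
  "kalton_map A f = (\<Sum>a\<in>{a \<in> A. f a \<noteq> 0}. f a)"

definition abs_cauchy_summable :: "'a::{topological_ab_group_add} set \<Rightarrow> bool" where
  "abs_cauchy_summable A \<longleftrightarrow>
     (\<forall>U. open U \<and> 0 \<in> U \<longrightarrow> (\<exists>F. finite F \<and> F \<subseteq> A \<and> gen_subgroup (A - F) \<subseteq> U))"

end

theory Submission
  imports Defs
begin

lemma gs_sub: "S \<subseteq> gen_subgroup S"
  unfolding gen_subgroup_def by auto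
lemma gs_0: "0 \<in> gen_subgroup S"
  unfolding gen_subgroup_def by auto
lemma gs_diff: "x \<in> gen_subgroup S \<Longrightarrow> y \<in> gen_subgroup S \<Longrightarrow> x - y \<in> gen_subgroup S"
  unfolding gen_subgroup_def by auto
lemma gs_min: "S \<subseteq> H \<Longrightarrow> 0 \<in> H \<Longrightarrow> (\<forall>x\<in>H. \<forall>y\<in>H. x - y \<in> H) \<Longrightarrow> gen_subgroup S \<subseteq> H"
  unfolding gen_subgroup_def by auto
lemma gs_mono: "S \<subseteq> T \<Longrightarrow> gen_subgroup S \<subseteq> gen_subgroup T"
  by (meson gs_0 gs_diff gs_min gs_sub order_trans)
lemma gs_add: "x \<in> gen_subgroup S \<Longrightarrow> y \<in> gen_subgroup S \<Longrightarrow> x + y \<in> gen_subgroup S"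
  using gs_diff[of x S "0 - y"] gs_diff[of 0 S y] gs_0[of S] by simp
lemma gs_sum: "finite T \<Longrightarrow> (\<And>a. a \<in> T \<Longrightarrow> f a \<in> gen_subgroup S) \<Longrightarrow> sum f T \<in> gen_subgroup S"
  by (induction T rule: finite_induct) (auto simp: gs_0 gs_add)

lemma cyc_in: "a \<in> B \<Longrightarrow> cyclic_subgroup a \<subseteq> gen_subgroup B"
  unfolding cyclic_subgroup_def by (rule gs_mono) auto

lemma topspace_P: "topspace (P_top A) = (\<Pi>\<^sub>E a\<in>A. cyclic_subgroup a)"
  unfolding P_top_def by simp

lemma topspace_S: "topspace (S_top A) = S_set A"
  unfolding S_top_def S_set_def by auto

lemma kalton_eq:
  assumes "finite T" "T \<subseteq> A" "{a \<in> A. f a \<noteq> 0} \<subseteq> T"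
  shows "kalton_map A f = sum f T"
  unfolding kalton_map_def
  by (rule sum.mono_neutral_left) (use assms in \<open>auto intro: finite_subset\<close>)

lemma continuous_map_sum':
  fixes f :: "'a\<Rightarrow>'b\<Rightarrow>'c::topological_comm_monoid_add"
  shows "\<lbrakk>finite I; \<And>i. i \<in> I \<Longrightarrow> continuous_map X euclidean (\<lambda>x. f x i)\<rbrakk>
         \<Longrightarrow> continuous_map X euclidean (\<lambda>x. sum (f x) I)"
  by (simp add: continuous_map_atin tendsto_sum)

lemma proj_cont: "a \<in> A \<Longrightarrow> continuous_map (P_top A) euclidean (\<lambda>f. f a)"
  unfolding P_top_def
  by (rule continuous_map_into_fulltopology, rule continuous_map_product_projection)

theorem theorem3p5:
  fixes A :: "'a::{topological_ab_group_add, t2_space} set"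
  assumes "0 \<notin> A"
  shows "abs_cauchy_summable A \<longleftrightarrow> continuous_map (S_top A) euclidean (kalton_map A)"
proof
  assume acs: "abs_cauchy_summable A"
  show "continuous_map (S_top A) euclidean (kalton_map A)"
    unfolding continuous_map_def
  proof (intro conjI allI impI)
    show "kalton_map A \<in> topspace (S_top A) \<rightarrow> topspace euclidean" by simp
  next
    fix V :: "'a set"
    assume "openin euclidean V"
    hence oV: "open V" by simp
    show "openin (S_top A) {x \<in> topspace (S_top A). kalton_map A x \<in> V}"
      unfolding topspace_S
    proof (subst openin_subopen, intro ballI)
      fix f0 assume f0: "f0 \<in> {x \<in> S_set A. kalton_map A x \<in> V}"
      have "open ((\<lambda>p. fst p + snd p) -` V)"
        by (intro open_vimage oV continuous_intros)
      moreover have "(kalton_map A f0, 0) \<in> (\<lambda>p. fst p + snd p) -` V" using f0 by simp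
      ultimately obtain V1 U where V1U: "open V1" "open U" "(kalton_map A f0, 0) \<in> V1 \<times> U"
        "V1 \<times> U \<subseteq> (\<lambda>p. fst p + snd p) -` V"
        by (rule open_prod_elim)
      from acs V1U obtain F where F: "finite F" "F \<subseteq> A" "gen_subgroup (A - F) \<subseteq> U"
        unfolding abs_cauchy_summable_def by auto
      define F' where "F' = F \<union> {a \<in> A. f0 a \<noteq> 0}"
      have fin0: "finite {a \<in> A. f0 a \<noteq> 0}" using f0 unfolding S_set_def by auto
      have F': "finite F'" "F' \<subseteq> A" using F fin0 unfolding F'_def by auto
      define g where "g = (\<lambda>f::'a\<Rightarrow>'a. \<Sum>a\<in>F'. f a)"
      have gc: "continuous_map (P_top A) euclidean g"
        unfolding g_def using F' proj_cont by (intro continuous_map_sum') auto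
      define Ob where "Ob = {f \<in> topspace (P_top A). g f \<in> V1}"
      have oOb: "openin (P_top A) Ob"
        unfolding Ob_def using gc V1U(1) by (simp add: continuous_map_def)
      have gf0: "g f0 = kalton_map A f0"
        unfolding g_def by (rule kalton_eq[symmetric]) (use F' in \<open>auto simp: F'_def\<close>)
      have "openin (S_top A) (Ob \<inter> S_set A)"
        unfolding S_top_def openin_subtopology using oOb by blast
      moreover have "f0 \<in> Ob \<inter> S_set A"
        using f0 gf0 V1U(3) unfolding Ob_def S_set_def by auto
      moreover have "Ob \<inter> S_set A \<subseteq> {x \<in> S_set A. kalton_map A x \<in> V}"
      proof
        fix f assume f: "f \<in> Ob \<inter> S_set A"
        define T where "T = F' \<union> {a \<in> A. f a \<noteq> 0}"
        have finf: "finite {a \<in> A. f a \<noteq> 0}" using f unfolding S_set_def by auto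
        have T: "finite T" "T \<subseteq> A" using F' finf unfolding T_def by auto
        have "kalton_map A f = sum f T"
          by (rule kalton_eq) (use T in \<open>auto simp: T_def\<close>)
        also have "\<dots> = g f + sum f (T - F')"
        proof -
          have "T = F' \<union> (T - F')" "F' \<inter> (T - F') = {}" unfolding T_def by auto
          hence "sum f T = sum f F' + sum f (T - F')"
            using T F' by (metis finite_Diff sum.union_disjoint)
          thus ?thesis unfolding g_def .
        qed
        finally have eq: "kalton_map A f = g f + sum f (T - F')" .
        have fP: "f \<in> (\<Pi>\<^sub>E a\<in>A. cyclic_subgroup a)" using f unfolding S_set_def topspace_P by auto
        have "sum f (T - F') \<in> gen_subgroup (A - F)"
        proof (rule gs_sum)
          show "finite (T - F')" using T by auto
        next
          fix a assume a: "a \<in> T - F'"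
          hence "a \<in> A - F" using T unfolding F'_def by auto
          moreover have "f a \<in> cyclic_subgroup a" using fP a T by auto
          ultimately show "f a \<in> gen_subgroup (A - F)" using cyc_in by blast
        qed
        hence "sum f (T - F') \<in> U" using F by auto
        moreover have "g f \<in> V1" using f unfolding Ob_def by auto
        ultimately have "kalton_map A f \<in> V" using V1U(4) eq by auto
        thus "f \<in> {x \<in> S_set A. kalton_map A x \<in> V}" using f by auto
      qed
      ultimately show "\<exists>T. openin (S_top A) T \<and> f0 \<in> T \<and> T \<subseteq> {x \<in> S_set A. kalton_map A x \<in> V}"
        by blast
    qed
  qed
next
  assume kc: "continuous_map (S_top A) euclidean (kalton_map A)"
  show "abs_cauchy_summable A"
    unfolding abs_cauchy_summable_def
  proof (intro allI impI)
    fix U :: "'a set" assume U: "open U \<and> 0 \<in> U"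
    have "openin (S_top A) {x \<in> topspace (S_top A). kalton_map A x \<in> U}"
      using kc U unfolding continuous_map_def by auto
    then obtain Ob where Ob: "openin (P_top A) Ob" "{x \<in> S_set A. kalton_map A x \<in> U} = Ob \<inter> S_set A"
      unfolding topspace_S unfolding S_top_def openin_subtopology by auto
    define z where "z = restrict (\<lambda>_. 0::'a) A"
    have c0: "0 \<in> cyclic_subgroup a" for a :: 'a unfolding cyclic_subgroup_def by (rule gs_0)
    have ca: "a \<in> cyclic_subgroup a" for a :: 'a unfolding cyclic_subgroup_def using gs_sub by blast
    have cd: "x \<in> cyclic_subgroup a \<Longrightarrow> y \<in> cyclic_subgroup a \<Longrightarrow> x - y \<in> cyclic_subgroup a" for x y a :: 'a
      unfolding cyclic_subgroup_def by (rule gs_diff)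
    have zS: "z \<in> S_set A" unfolding S_set_def topspace_P z_def using c0 by auto
    have Kz: "kalton_map A z = 0" unfolding kalton_map_def z_def by auto
    have "z \<in> {x \<in> S_set A. kalton_map A x \<in> U}" using zS Kz U by simp
    hence "z \<in> Ob" unfolding Ob(2) by simp
    then obtain Uf where Uf: "finite {i \<in> A. Uf i \<noteq> topspace (subtopology euclidean (cyclic_subgroup i))}"
       "\<forall>i\<in>A. openin (subtopology euclidean (cyclic_subgroup i)) (Uf i)" "z \<in> Pi\<^sub>E A Uf" "Pi\<^sub>E A Uf \<subseteq> Ob"
      using Ob(1) unfolding P_top_def openin_product_topology_alt by blast
    define F where "F = {i \<in> A. Uf i \<noteq> cyclic_subgroup i}"
    have F: "finite F" "F \<subseteq> A" using Uf(1) unfolding F_def by auto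
    have key: "kalton_map A f \<in> U" if f: "f \<in> S_set A" "\<forall>a\<in>F. f a = 0" for f
    proof -
      have fP: "f \<in> (\<Pi>\<^sub>E a\<in>A. cyclic_subgroup a)" using f unfolding S_set_def topspace_P by auto
      have "f \<in> Pi\<^sub>E A Uf"
      proof (rule PiE_I)
        fix a assume a: "a \<in> A"
        show "f a \<in> Uf a"
        proof (cases "a \<in> F")
          case True thus ?thesis using f Uf(3) a unfolding z_def by auto
        next
          case False thus ?thesis using fP a unfolding F_def by auto
        qed
      next
        fix a assume "a \<notin> A" thus "f a = undefined" using fP by auto
      qed
      hence "f \<in> Ob \<inter> S_set A" using Uf(4) f by auto
      thus ?thesis using Ob(2) by blast
    qed
    define H where "H = {kalton_map A f | f. f \<in> S_set A \<and> (\<forall>a\<in>F. f a = 0)}"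
    have "gen_subgroup (A - F) \<subseteq> H"
    proof (rule gs_min)
      show "A - F \<subseteq> H"
      proof
        fix a assume a: "a \<in> A - F"
        define f where "f = restrict (\<lambda>b. if b = a then a else 0) A"
        have fS: "f \<in> S_set A" unfolding S_set_def topspace_P f_def using c0 ca
          by (auto intro: finite_subset[of _ "{a}"])
        have "kalton_map A f = sum f {a}"
          by (rule kalton_eq) (use a in \<open>auto simp: f_def\<close>)
        hence "kalton_map A f = a" using a by (simp add: f_def)
        moreover have "\<forall>b\<in>F. f b = 0" using a F unfolding f_def by auto
        ultimately show "a \<in> H" unfolding H_def using fS by blast
      qed
    next
      have "\<forall>a\<in>F. z a = 0" using F unfolding z_def by auto
      hence "\<exists>f. 0 = kalton_map A f \<and> f \<in> S_set A \<and> (\<forall>a\<in>F. f a = 0)" using zS Kz by metis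
      thus "0 \<in> H" unfolding H_def by simp
    next
      show "\<forall>x\<in>H. \<forall>y\<in>H. x - y \<in> H"
      proof (intro ballI)
        fix x y assume "x \<in> H" "y \<in> H"
        then obtain f g where fg: "x = kalton_map A f" "f \<in> S_set A" "\<forall>a\<in>F. f a = 0"
          "y = kalton_map A g" "g \<in> S_set A" "\<forall>a\<in>F. g a = 0" unfolding H_def by blast
        define h where "h = restrict (\<lambda>b. f b - g b) A"
        define T where "T = {a \<in> A. f a \<noteq> 0} \<union> {a \<in> A. g a \<noteq> 0}"
        have T: "finite T" "T \<subseteq> A" using fg unfolding T_def S_set_def by auto
        have fP: "f \<in> (\<Pi>\<^sub>E a\<in>A. cyclic_subgroup a)" "g \<in> (\<Pi>\<^sub>E a\<in>A. cyclic_subgroup a)"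
          using fg unfolding S_set_def topspace_P by auto
        have hP: "h \<in> (\<Pi>\<^sub>E a\<in>A. cyclic_subgroup a)" using fP unfolding h_def by (auto intro!: cd)
        have hsub: "{a \<in> A. h a \<noteq> 0} \<subseteq> T" unfolding h_def T_def by auto
        have hS: "h \<in> S_set A" unfolding S_set_def topspace_P using hP hsub T
          by (auto intro: finite_subset)
        have "kalton_map A h = sum h T" by (rule kalton_eq) (use T hsub in auto)
        also have "\<dots> = sum f T - sum g T" using T unfolding h_def
          by (simp add: sum_subtractf subset_iff)
        also have "sum f T = x" unfolding fg(1) by (rule kalton_eq[symmetric]) (use T in \<open>auto simp: T_def\<close>)
        also have "sum g T = y" unfolding fg(4) by (rule kalton_eq[symmetric]) (use T in \<open>auto simp: T_def\<close>)
        finally have "kalton_map A h = x - y" .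
        moreover have "\<forall>a\<in>F. h a = 0" using fg F unfolding h_def by auto
        ultimately have "\<exists>f. x - y = kalton_map A f \<and> f \<in> S_set A \<and> (\<forall>a\<in>F. f a = 0)" using hS by metis
        thus "x - y \<in> H" unfolding H_def by simp
      qed
    qed
    moreover have "H \<subseteq> U" unfolding H_def using key by blast
    ultimately show "\<exists>F. finite F \<and> F \<subseteq> A \<and> gen_subgroup (A - F) \<subseteq> U" using F by blast
  qed
qed

end
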